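(* Let $f$ be a nonzero real homogeneous polynomial of degree $p\ge1$ in $n$ variables. (a) If $f(x)=a(c^\top x)^p$ for some $c\in\mathbb R^n\setminus\{0\}$ and $a\ne0$, then $\|f^k\|_{HS}=\|f^k\|_\sigma=|a|^k\|c\|_2^{kp}$ for all $k\in\mathbb N$. (b) If $f$ is not of this form, then for all $k,l\in\mathbb N$: $\|f^{k+l}\|_{HS}<\|f^k\|_{HS}\|f^l\|_{HS}$, $\|f^{2k}\|_{HS}<\|f^k\|_{HS}^2$, and $\|f\|_\sigma^k<\|f^k\|_{HS}$. Moreover the limit $\rho_1(f):=\lim_{k\to\infty}\|f^k\|_{HS}^{1/k}$ exists, $\rho_1(f)\ge\|f\|_\sigma$, and $\rho_1(f)<\|f^k\|_{HS}^{1/k}$ for every $k\in\mathbb N$.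
   Context: Every real homogeneous polynomial $f$ of degree $p$ in $n$ variables is $f(x)=\langle\mathcal F,\otimes^p x\rangle$ for a unique symmetric tensor $\mathcal F\in\mathrm S^p\mathbb R^n$, where $\langle\cdot,\cdot\rangle$ is the entrywise (Hilbert–Schmidt) inner product of tensors and $\otimes^p x=x\otimes\cdots\otimes x$. Set $\|f\|_{HS}:=\|\mathcal F\|_{HS}=\sqrt{\langle\mathcal F,\mathcal F\rangle}$; equivalently, if $f(x)=\sum_{j_1+\cdots+j_n=p}\frac{p!}{j_1!\cdots j_n!}\phi_{j_1,\dots,j_n}x_1^{j_1}\cdots x_n^{j_n}$ then $\|f\|_{HS}^2=\sum\frac{p!}{j_1!\cdots j_n!}\phi_{j_1,\dots,j_n}^2$. Also $\|f\|_\sigma:=\max\{|f(x)|:x\in\mathbb R^n,\|x\|_2=1\}$. Powers $f^k$ are ordinary powers of polynomials. *)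

theory Defs
  imports "HOL-Analysis.Analysis" "HOL-Library.Poly_Mapping"
begin

text \<open>Real polynomials in variables indexed by a finite type 'n (i.e. R^n with n = CARD('n)):
  a finitely supported map from exponent vectors (monomials) to real coefficients.
  Multiplication (hence powers) is the convolution product of Poly_Mapping.\<close>
type_synonym 'n mpoly = "('n \<Rightarrow>\<^sub>0 nat) \<Rightarrow>\<^sub>0 real"

definition mdeg :: "('n::finite \<Rightarrow>\<^sub>0 nat) \<Rightarrow> nat" where
  "mdeg m = (\<Sum>i\<in>UNIV. Poly_Mapping.lookup m i)"

definition homogeneous :: "nat \<Rightarrow> 'n::finite mpoly \<Rightarrow> bool" where
  "homogeneous p f \<longleftrightarrow> (\<forall>m\<in>Poly_Mapping.keys f. mdeg m = p)"

definition meval :: "'n::finite mpoly \<Rightarrow> real^'n \<Rightarrow> real" where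
  "meval f x = (\<Sum>m\<in>Poly_Mapping.keys f. Poly_Mapping.lookup f m * (\<Prod>i\<in>UNIV. (x $ i) ^ Poly_Mapping.lookup m i))"

text \<open>Hilbert-Schmidt norm: writing the coefficient of x^j as (p!/(j_1!...j_n!)) phi_j,
  the squared norm is sum of (p!/(j_1!...j_n!)) phi_j^2, i.e. sum of coeff^2 * (prod j_i!) / p!.\<close>
definition hs_norm :: "'n::finite mpoly \<Rightarrow> real" where
  "hs_norm f = sqrt (\<Sum>m\<in>Poly_Mapping.keys f. (Poly_Mapping.lookup f m)\<^sup>2 * (\<Prod>i\<in>UNIV. fact (Poly_Mapping.lookup m i)) / fact (mdeg m))"

definition sigma_norm :: "'n::finite mpoly \<Rightarrow> real" where
  "sigma_norm f = Sup {\<bar>meval f x\<bar> | x. norm x = 1}"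

end

theory Submission
  imports Defs "HOL-Computational_Algebra.Polynomial"
begin

definition ev :: "'n \<Rightarrow> ('n \<Rightarrow>\<^sub>0 nat)" where "ev i = Poly_Mapping.single i 1"
definition mon :: "real^'n \<Rightarrow> ('n::finite \<Rightarrow>\<^sub>0 nat) \<Rightarrow> real" where
  "mon x m = (\<Prod>i\<in>UNIV. (x $ i) ^ Poly_Mapping.lookup m i)"
definition mf :: "('n::finite \<Rightarrow>\<^sub>0 nat) \<Rightarrow> real" where
  "mf m = (\<Prod>i\<in>UNIV. fact (Poly_Mapping.lookup m i))"
definition Dg :: "nat \<Rightarrow> ('n::finite \<Rightarrow>\<^sub>0 nat) set" where "Dg d = {m. mdeg m = d}"
definition wt :: "('n::finite \<Rightarrow>\<^sub>0 nat) \<Rightarrow> real" where "wt m = mf m / fact (mdeg m)"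

lemma mf_pos: "mf m > 0"
  unfolding mf_def by (intro prod_pos) auto

lemma wt_pos: "wt m > 0"
  unfolding wt_def using mf_pos by (auto intro!: divide_pos_pos)

lemma lookup_le_mdeg: "Poly_Mapping.lookup m i \<le> mdeg (m::'n::finite \<Rightarrow>\<^sub>0 nat)"
  unfolding mdeg_def by (rule member_le_sum) auto

lemma finite_Dg: "finite (Dg d :: ('n::finite \<Rightarrow>\<^sub>0 nat) set)"
proof -
  have "Poly_Mapping.lookup ` Dg d \<subseteq> PiE UNIV (\<lambda>_. {..d})"
    using lookup_le_mdeg unfolding Dg_def by (auto simp: PiE_def extensional_def)
  moreover have "finite (PiE (UNIV::'n set) (\<lambda>_. {..d}))"
    by (rule finite_PiE) auto
  ultimately have "finite (Poly_Mapping.lookup ` (Dg d :: ('n \<Rightarrow>\<^sub>0 nat) set))"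
    using finite_subset by blast
  then show ?thesis
    by (rule finite_imageD) (simp add: inj_on_def poly_mapping_eqI)
qed

lemma mdeg_add: "mdeg (a + b :: 'n::finite \<Rightarrow>\<^sub>0 nat) = mdeg a + mdeg b"
  unfolding mdeg_def by (simp add: lookup_add sum.distrib)

lemma mdeg_zero[simp]: "mdeg (0 :: 'n::finite \<Rightarrow>\<^sub>0 nat) = 0"
  unfolding mdeg_def by simp

lemma lookup_ev: "Poly_Mapping.lookup (ev i) j = (if i = j then 1 else 0)"
  unfolding ev_def by (simp add: lookup_single when_def)

lemma mdeg_ev[simp]: "mdeg (ev i :: 'n::finite \<Rightarrow>\<^sub>0 nat) = 1"
  unfolding mdeg_def lookup_ev by simp

lemma homogeneous_keys: "homogeneous d f \<longleftrightarrow> Poly_Mapping.keys f \<subseteq> Dg d"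
  unfolding homogeneous_def Dg_def by auto

lemma sum_superset_keys:
  fixes f :: "'a \<Rightarrow>\<^sub>0 real" and h :: "'a \<Rightarrow> real"
  assumes "finite K" "Poly_Mapping.keys f \<subseteq> K"
  shows "(\<Sum>m\<in>Poly_Mapping.keys f. Poly_Mapping.lookup f m * h m) = (\<Sum>m\<in>K. Poly_Mapping.lookup f m * h m)"
  by (rule sum.mono_neutral_left) (use assms in \<open>auto simp: in_keys_iff\<close>)

lemma meval_superset:
  assumes "finite K" "Poly_Mapping.keys f \<subseteq> K"
  shows "meval f x = (\<Sum>m\<in>K. Poly_Mapping.lookup f m * mon x m)"
  unfolding meval_def mon_def[symmetric] using sum_superset_keys[OF assms] .

lemma mult_if0: "(x::'a::semiring_0) * (if P then y else 0) = (if P then x * y else 0)"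
  by simp

lemma if0_mult: "(if P then y else 0) * (x::'a::semiring_0) = (if P then y * x else 0)"
  by simp

lemma lookup_mult_sum:
  fixes f g :: "'a::comm_monoid_add \<Rightarrow>\<^sub>0 real"
  assumes "finite A" "finite B" "Poly_Mapping.keys f \<subseteq> A" "Poly_Mapping.keys g \<subseteq> B"
  shows "Poly_Mapping.lookup (f * g) k =
    (\<Sum>a\<in>A. \<Sum>b\<in>B. if a + b = k then Poly_Mapping.lookup f a * Poly_Mapping.lookup g b else 0)"
proof -
  have inner: "Sum_any (\<lambda>q. Poly_Mapping.lookup g q when k = l + q) =
     (\<Sum>b\<in>B. Poly_Mapping.lookup g b when k = l + b)" for l
    apply (rule Sum_any.expand_superset)
    using assms(2,4) apply simp
    using assms(4) apply (auto simp: in_keys_iff when_def)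
    done
  have outer: "Sum_any (\<lambda>l. Poly_Mapping.lookup f l * Sum_any (\<lambda>q. Poly_Mapping.lookup g q when k = l + q))
     = (\<Sum>l\<in>A. Poly_Mapping.lookup f l * Sum_any (\<lambda>q. Poly_Mapping.lookup g q when k = l + q))"
    apply (rule Sum_any.expand_superset)
    using assms(1) apply simp
    using assms(3) apply (auto simp: in_keys_iff)
    done
  have eq: "Poly_Mapping.lookup f a * (Poly_Mapping.lookup g b when k = a + b) = 
     (if a + b = k then Poly_Mapping.lookup f a * Poly_Mapping.lookup g b else 0)" for a b
    by (auto simp: when_def)
  show ?thesis
    by (simp only: lookup_mult outer) (simp only: inner sum_distrib_left eq)
qed

lemma homogeneous_mult:
  assumes "homogeneous p f" "homogeneous q g"
  shows "homogeneous (p + q) (f * g)"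
  unfolding homogeneous_def
proof
  fix m assume "m \<in> Poly_Mapping.keys (f * g)"
  then obtain a b where "m = a + b" "a \<in> Poly_Mapping.keys f" "b \<in> Poly_Mapping.keys g"
    using keys_mult[of f g] by blast
  then show "mdeg m = p + q" using assms unfolding homogeneous_def by (simp add: mdeg_add)
qed

lemma homogeneous_one: "homogeneous 0 (1 :: 'n::finite mpoly)"
  unfolding homogeneous_def by (auto simp: in_keys_iff lookup_one when_def)

lemma homogeneous_power:
  assumes "homogeneous p f" shows "homogeneous (k * p) (f ^ k)"
proof (induction k)
  case 0 then show ?case using homogeneous_one by simp
next
  case (Suc k)
  then show ?case using homogeneous_mult[OF assms Suc] by (simp add: add.commute)
qed

lemma sum_swap3: "(\<Sum>m\<in>K. \<Sum>a\<in>A. \<Sum>b\<in>B. F m a b) = (\<Sum>a\<in>A. \<Sum>b\<in>B. \<Sum>m\<in>K. F m a b)"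
  apply (rule trans[OF sum.swap])
  apply (rule sum.cong[OF refl])
  apply (rule sum.swap)
  done

lemma mon_add: "mon x (a + b) = mon x a * mon x b"
  unfolding mon_def by (simp add: lookup_add power_add prod.distrib)

lemma meval_mult: "meval (f * g) x = meval f x * meval g x"
proof -
  let ?A = "Poly_Mapping.keys f" and ?B = "Poly_Mapping.keys g"
  let ?K = "(\<lambda>(a,b). a + b) ` (?A \<times> ?B)"
  have fK: "finite ?K" by simp
  have kK: "Poly_Mapping.keys (f * g) \<subseteq> ?K" using keys_mult[of f g] by auto
  have "meval (f * g) x = (\<Sum>m\<in>?K. Poly_Mapping.lookup (f * g) m * mon x m)"
    by (rule meval_superset[OF fK kK])
  also have "\<dots> = (\<Sum>m\<in>?K. (\<Sum>a\<in>?A. \<Sum>b\<in>?B. if a + b = m then Poly_Mapping.lookup f a * Poly_Mapping.lookup g b * mon x m else 0))"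
    by (intro sum.cong refl) (simp add: lookup_mult_sum[of ?A ?B] sum_distrib_right if0_mult)
  also have "\<dots> = (\<Sum>a\<in>?A. \<Sum>b\<in>?B. \<Sum>m\<in>?K. if a + b = m then Poly_Mapping.lookup f a * Poly_Mapping.lookup g b * mon x m else 0)"
    by (rule sum_swap3)
  also have "\<dots> = (\<Sum>a\<in>?A. \<Sum>b\<in>?B. Poly_Mapping.lookup f a * mon x a * (Poly_Mapping.lookup g b * mon x b))"
  proof (intro sum.cong refl)
    fix a b assume "a \<in> ?A" "b \<in> ?B"
    then have "a + b \<in> ?K" by auto
    then show "(\<Sum>m\<in>?K. if a + b = m then Poly_Mapping.lookup f a * Poly_Mapping.lookup g b * mon x m else 0)
        = Poly_Mapping.lookup f a * mon x a * (Poly_Mapping.lookup g b * mon x b)"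
      by (simp add: sum.delta mon_add)
  qed
  also have "\<dots> = meval f x * meval g x"
    unfolding meval_def mon_def[symmetric] by (simp add: sum_product)
  finally show ?thesis .
qed

lemma meval_one: "meval 1 x = 1"
proof -
  have "meval 1 x = (\<Sum>m\<in>{0}. Poly_Mapping.lookup 1 m * mon x m)"
    by (rule meval_superset) (auto simp: in_keys_iff lookup_one when_def)
  then show ?thesis by (simp add: mon_def)
qed

lemma meval_power: "meval (f ^ k) x = meval f x ^ k"
  by (induction k) (simp_all add: meval_one meval_mult)

lemma meval_add: "meval (f + g) x = meval f x + meval g x"
proof -
  let ?K = "Poly_Mapping.keys f \<union> Poly_Mapping.keys g"
  have "meval (f + g) x = (\<Sum>m\<in>?K. Poly_Mapping.lookup (f + g) m * mon x m)"
    by (rule meval_superset) (auto simp: in_keys_iff lookup_add)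
  also have "\<dots> = (\<Sum>m\<in>?K. Poly_Mapping.lookup f m * mon x m) + (\<Sum>m\<in>?K. Poly_Mapping.lookup g m * mon x m)"
    by (simp add: lookup_add distrib_right sum.distrib)
  also have "\<dots> = meval f x + meval g x"
    by (simp add: meval_superset[symmetric])
  finally show ?thesis .
qed

lemma meval_uminus: "meval (- f) x = - meval f x"
  unfolding meval_def by (simp add: sum_negf)

lemma meval_diff: "meval (f - g) x = meval f x - meval g x"
  using meval_add[of f "-g" x] by (simp add: meval_uminus)

lemma hs_norm_Dg:
  assumes "homogeneous d g"
  shows "hs_norm g = sqrt (\<Sum>m\<in>Dg d. (Poly_Mapping.lookup g m)\<^sup>2 * wt m)"
proof -
  have "(\<Sum>m\<in>Poly_Mapping.keys g. (Poly_Mapping.lookup g m)\<^sup>2 * (\<Prod>i\<in>UNIV. fact (Poly_Mapping.lookup m i)) / fact (mdeg m))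
      = (\<Sum>m\<in>Poly_Mapping.keys g. Poly_Mapping.lookup g m * (Poly_Mapping.lookup g m * wt m))"
    by (intro sum.cong refl) (simp add: wt_def mf_def power2_eq_square)
  also have "\<dots> = (\<Sum>m\<in>Dg d. Poly_Mapping.lookup g m * (Poly_Mapping.lookup g m * wt m))"
    by (rule sum_superset_keys) (use assms finite_Dg in \<open>auto simp: homogeneous_keys\<close>)
  finally show ?thesis unfolding hs_norm_def by (simp add: power2_eq_square mult.assoc)
qed

lemma add_eq_pm_iff:
  "(k + b = (m::'a \<Rightarrow>\<^sub>0 nat)) \<longleftrightarrow> (b = m - k \<and> (\<forall>i. Poly_Mapping.lookup k i \<le> Poly_Mapping.lookup m i))"
proof
  assume h: "k + b = m"
  then have "\<forall>i. Poly_Mapping.lookup k i \<le> Poly_Mapping.lookup m i"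
    by (auto simp: lookup_add)
  moreover have "b = m - k"
    by (rule poly_mapping_eqI) (simp add: h[symmetric] lookup_add lookup_minus)
  ultimately show "b = m - k \<and> (\<forall>i. Poly_Mapping.lookup k i \<le> Poly_Mapping.lookup m i)" by simp
next
  assume h: "b = m - k \<and> (\<forall>i. Poly_Mapping.lookup k i \<le> Poly_Mapping.lookup m i)"
  show "k + b = m"
    by (rule poly_mapping_eqI) (use h in \<open>simp add: lookup_add lookup_minus\<close>)
qed

lemma lookup_single_mult:
  fixes g :: "'a mpoly"
  shows "Poly_Mapping.lookup (Poly_Mapping.single k r * g) m =
    (if \<forall>i. Poly_Mapping.lookup k i \<le> Poly_Mapping.lookup m i then r * Poly_Mapping.lookup g (m - k) else 0)"
proof -
  have "Poly_Mapping.lookup (Poly_Mapping.single k r * g) m =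
     (\<Sum>a\<in>{k}. \<Sum>b\<in>Poly_Mapping.keys g. if a + b = m then Poly_Mapping.lookup (Poly_Mapping.single k r) a * Poly_Mapping.lookup g b else 0)"
    by (rule lookup_mult_sum) auto
  also have "\<dots> = (\<Sum>b\<in>Poly_Mapping.keys g. if k + b = m then r * Poly_Mapping.lookup g b else 0)"
    by (simp add: lookup_single when_def cong: if_cong)
  also have "\<dots> = (if \<forall>i. Poly_Mapping.lookup k i \<le> Poly_Mapping.lookup m i then r * Poly_Mapping.lookup g (m - k) else 0)"
  proof (cases "\<forall>i. Poly_Mapping.lookup k i \<le> Poly_Mapping.lookup m i")
    case True
    then have "(\<Sum>b\<in>Poly_Mapping.keys g. if k + b = m then r * Poly_Mapping.lookup g b else 0)
       = (\<Sum>b\<in>Poly_Mapping.keys g. if b = m - k then r * Poly_Mapping.lookup g b else 0)"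
      by (intro sum.cong refl) (simp add: add_eq_pm_iff)
    also have "\<dots> = r * Poly_Mapping.lookup g (m - k)"
      by (simp add: sum.delta' in_keys_iff)
    finally show ?thesis using True by simp
  next
    case False
    then show ?thesis by (auto simp: add_eq_pm_iff intro!: sum.neutral)
  qed
  finally show ?thesis .
qed

definition Lc :: "real^'n \<Rightarrow> 'n::finite mpoly" where
  "Lc c = (\<Sum>i\<in>UNIV. Poly_Mapping.single (ev i) (c $ i))"

definition MM :: "('n::finite \<Rightarrow>\<^sub>0 nat) \<Rightarrow> real" where "MM m = fact (mdeg m) / mf m"

lemma MM_pos: "MM m > 0" unfolding MM_def using mf_pos by (auto intro!: divide_pos_pos)

lemma MM_wt: "MM m * wt m = 1"
  unfolding MM_def wt_def using mf_pos[of m] by simp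

lemma le_ev_iff: "(\<forall>j. Poly_Mapping.lookup (ev i) j \<le> Poly_Mapping.lookup m j) \<longleftrightarrow> 1 \<le> Poly_Mapping.lookup m i"
  by (auto simp: lookup_ev)

lemma lookup_Lc_mult:
  "Poly_Mapping.lookup (Lc c * g) m =
    (\<Sum>i\<in>UNIV. if 1 \<le> Poly_Mapping.lookup m i then c $ i * Poly_Mapping.lookup g (m - ev i) else 0)"
  unfolding Lc_def sum_distrib_right lookup_sum lookup_single_mult le_ev_iff ..

lemma pm_minus_ev_add: "1 \<le> Poly_Mapping.lookup m i \<Longrightarrow> (m - ev i) + ev i = m"
  by (rule poly_mapping_eqI) (auto simp: lookup_add lookup_minus lookup_ev)

lemma mdeg_minus_ev: "1 \<le> Poly_Mapping.lookup m i \<Longrightarrow> mdeg (m - ev i :: 'n::finite \<Rightarrow>\<^sub>0 nat) = mdeg m - 1"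
  using mdeg_add[of "m - ev i" "ev i"] pm_minus_ev_add[of m i] by simp

lemma mdeg_pos_ev: "1 \<le> Poly_Mapping.lookup m i \<Longrightarrow> 1 \<le> mdeg (m :: 'n::finite \<Rightarrow>\<^sub>0 nat)"
  using lookup_le_mdeg[of m i] by simp

lemma mf_minus_ev:
  assumes "1 \<le> Poly_Mapping.lookup m i"
  shows "mf m = mf (m - ev i) * real (Poly_Mapping.lookup m i)"
proof -
  have "mf m = fact (Poly_Mapping.lookup m i) * (\<Prod>j\<in>UNIV - {i}. fact (Poly_Mapping.lookup m j))"
    unfolding mf_def by (rule prod.remove) auto
  moreover have "mf (m - ev i) = fact (Poly_Mapping.lookup m i - 1) * (\<Prod>j\<in>UNIV - {i}. fact (Poly_Mapping.lookup m j))"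
  proof -
    have "mf (m - ev i) = fact (Poly_Mapping.lookup (m - ev i) i) * (\<Prod>j\<in>UNIV - {i}. fact (Poly_Mapping.lookup (m - ev i) j))"
      unfolding mf_def by (rule prod.remove) auto
    moreover have "(\<Prod>j\<in>UNIV - {i}. fact (Poly_Mapping.lookup (m - ev i) j) :: real) = (\<Prod>j\<in>UNIV - {i}. fact (Poly_Mapping.lookup m j))"
      by (intro prod.cong refl) (auto simp: lookup_minus lookup_ev)
    ultimately show ?thesis by (simp add: lookup_minus lookup_ev)
  qed
  moreover have "(fact (Poly_Mapping.lookup m i) :: real) = real (Poly_Mapping.lookup m i) * fact (Poly_Mapping.lookup m i - 1)"
    using assms by (simp add: fact_reduce)
  ultimately show ?thesis by simp
qed

lemma mon_ev: "mon c (ev i) = c $ i"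
proof -
  have "mon c (ev i) = (\<Prod>j\<in>UNIV. if i = j then c $ j else 1)"
    unfolding mon_def by (intro prod.cong refl) (simp add: lookup_ev)
  then show ?thesis by (simp add: prod.delta)
qed

lemma mon_minus_ev: "1 \<le> Poly_Mapping.lookup m i \<Longrightarrow> mon c m = c $ i * mon c (m - ev i)"
  using mon_add[of c "m - ev i" "ev i"] pm_minus_ev_add[of m i] by (simp add: mon_ev)

lemma mdeg_eq_0_iff: "mdeg (m :: 'n::finite \<Rightarrow>\<^sub>0 nat) = 0 \<longleftrightarrow> m = 0"
proof
  assume "mdeg m = 0"
  then have "\<forall>i. Poly_Mapping.lookup m i = 0" unfolding mdeg_def by simp
  then show "m = 0" by (intro poly_mapping_eqI) simp
qed simp

lemma mf_zero: "mf 0 = 1" unfolding mf_def by simp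
lemma mon_zero: "mon c 0 = 1" unfolding mon_def by simp

lemma lookup_Lc_pow:
  "Poly_Mapping.lookup (Lc c ^ d) m = (if mdeg m = d then MM m * mon c m else 0)"
proof (induction d arbitrary: m)
  case 0
  show ?case by (auto simp: lookup_one when_def mdeg_eq_0_iff MM_def mf_zero mon_zero)
next
  case (Suc d)
  have "Poly_Mapping.lookup (Lc c ^ Suc d) m =
     (\<Sum>i\<in>UNIV. if 1 \<le> Poly_Mapping.lookup m i then c $ i * Poly_Mapping.lookup (Lc c ^ d) (m - ev i) else 0)"
    by (simp add: lookup_Lc_mult)
  also have "\<dots> = (\<Sum>i\<in>UNIV. if mdeg m = Suc d then real (Poly_Mapping.lookup m i) * (fact d / mf m * mon c m) else 0)"
  proof (intro sum.cong refl)
    fix i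
    show "(if 1 \<le> Poly_Mapping.lookup m i then c $ i * Poly_Mapping.lookup (Lc c ^ d) (m - ev i) else 0) =
      (if mdeg m = Suc d then real (Poly_Mapping.lookup m i) * (fact d / mf m * mon c m) else 0)"
    proof (cases "1 \<le> Poly_Mapping.lookup m i")
      case True
      have dm: "mdeg (m - ev i) = mdeg m - 1" using mdeg_minus_ev[OF True] .
      have pos: "1 \<le> mdeg m" using mdeg_pos_ev[OF True] .
      have mf1: "mf m = mf (m - ev i) * real (Poly_Mapping.lookup m i)" using mf_minus_ev[OF True] .
      have mo: "mon c m = c $ i * mon c (m - ev i)" using mon_minus_ev[OF True] .
      show ?thesis
      proof (cases "mdeg m = Suc d")
        case True2: True
        have "mdeg (m - ev i) = d" using dm True2 by simp
        then have "c $ i * Poly_Mapping.lookup (Lc c ^ d) (m - ev i) = c $ i * (fact d / mf (m - ev i) * mon c (m - ev i))"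
          using Suc.IH by (simp add: MM_def)
        also have "\<dots> = real (Poly_Mapping.lookup m i) * (fact d / mf m * mon c m)"
          using True mf_pos[of "m - ev i"] by (simp add: mf1 mo field_simps)
        finally show ?thesis using True True2 by simp
      next
        case False
        then have "mdeg (m - ev i) \<noteq> d" using dm pos by simp
        then show ?thesis using Suc.IH False True by simp
      qed
    next
      case False
      then show ?thesis by simp
    qed
  qed
  also have "\<dots> = (if mdeg m = Suc d then MM m * mon c m else 0)"
  proof (cases "mdeg m = Suc d")
    case True
    have sm: "(\<Sum>i\<in>UNIV. real (Poly_Mapping.lookup m i)) = real (mdeg m)"
      by (simp add: mdeg_def)
    have "(\<Sum>i\<in>UNIV. real (Poly_Mapping.lookup m i) * (fact d / mf m * mon c m)) = (\<Sum>i\<in>UNIV. real (Poly_Mapping.lookup m i)) * (fact d / mf m * mon c m)"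
      by (rule sum_distrib_right[symmetric])
    also have "\<dots> = real (mdeg m) * (fact d / mf m * mon c m)"
      by (simp only: sm)
    also have "\<dots> = MM m * mon c m"
      using True mf_pos[of m] by (simp add: MM_def field_simps)
    finally show ?thesis using True by simp
  qed simp
  finally show ?case .
qed

lemma keys_Lc_pow: "Poly_Mapping.keys (Lc c ^ d) \<subseteq> Dg d"
  by (auto simp: in_keys_iff lookup_Lc_pow Dg_def split: if_splits)

lemma homogeneous_Lc_pow: "homogeneous d (Lc c ^ d)"
  using keys_Lc_pow homogeneous_keys by blast

lemma mon_one: "mon 1 m = 1" unfolding mon_def by simp

lemma MM_conv:
  assumes "mdeg (m :: 'n::finite \<Rightarrow>\<^sub>0 nat) = p + q"
  shows "MM m = (\<Sum>a\<in>Dg p. \<Sum>b\<in>Dg q. if a + b = m then MM a * MM b else 0)"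
proof -
  have "MM m = Poly_Mapping.lookup (Lc 1 ^ (p + q) :: 'n mpoly) m"
    using assms by (simp add: lookup_Lc_pow mon_one)
  also have "\<dots> = Poly_Mapping.lookup (Lc 1 ^ p * Lc 1 ^ q :: 'n mpoly) m"
    by (simp add: power_add)
  also have "\<dots> = (\<Sum>a\<in>Dg p. \<Sum>b\<in>Dg q. if a + b = m then Poly_Mapping.lookup (Lc 1 ^ p :: 'n mpoly) a * Poly_Mapping.lookup (Lc 1 ^ q :: 'n mpoly) b else 0)"
    by (rule lookup_mult_sum) (auto simp: finite_Dg keys_Lc_pow)
  also have "\<dots> = (\<Sum>a\<in>Dg p. \<Sum>b\<in>Dg q. if a + b = m then MM a * MM b else 0)"
    by (intro sum.cong refl) (simp add: lookup_Lc_pow mon_one Dg_def)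
  finally show ?thesis .
qed

lemma meval_single: "meval (Poly_Mapping.single k r) x = r * mon x k"
proof -
  have "meval (Poly_Mapping.single k r) x = (\<Sum>m\<in>{k}. Poly_Mapping.lookup (Poly_Mapping.single k r) m * mon x m)"
    by (rule meval_superset) auto
  then show ?thesis by simp
qed

lemma meval_zero: "meval 0 x = 0" unfolding meval_def by simp

lemma meval_sum: "meval (\<Sum>i\<in>I. F i) x = (\<Sum>i\<in>I. meval (F i) x)"
  by (induction I rule: infinite_finite_induct) (simp_all add: meval_zero meval_add)

lemma meval_Lc: "meval (Lc c) x = c \<bullet> x"
  unfolding Lc_def meval_sum meval_single mon_ev inner_vec_def by simp

lemma meval_Lc_pow: "meval (Lc c ^ d) x = (c \<bullet> x) ^ d"
  by (simp add: meval_power meval_Lc)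

lemma multinomial:
  "(\<Sum>m\<in>Dg d. MM m * mon c m * mon x m) = (c \<bullet> x) ^ d"
proof -
  have "meval (Lc c ^ d) x = (\<Sum>m\<in>Dg d. Poly_Mapping.lookup (Lc c ^ d) m * mon x m)"
    by (rule meval_superset) (auto simp: finite_Dg keys_Lc_pow)
  also have "\<dots> = (\<Sum>m\<in>Dg d. MM m * mon c m * mon x m)"
    by (intro sum.cong refl) (simp add: lookup_Lc_pow Dg_def)
  finally show ?thesis by (simp add: meval_Lc_pow)
qed

lemma lookup_const_mult: fixes g :: "'a mpoly" shows "Poly_Mapping.lookup (Poly_Mapping.single 0 a * g) m = a * Poly_Mapping.lookup g m"
  using lookup_single_mult[of 0 a g m] by simp

lemma meval_const: "meval (Poly_Mapping.single 0 a) x = a"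
  by (simp add: meval_single mon_zero)

lemma digits_inj:
  fixes d d' :: "nat \<Rightarrow> nat"
  assumes "\<forall>j<n. d j < N" "\<forall>j<n. d' j < N" "(\<Sum>j<n. d j * N ^ j) = (\<Sum>j<n. d' j * N ^ j)"
  shows "\<forall>j<n. d j = d' j"
  using assms
proof (induction n arbitrary: d d')
  case 0 then show ?case by simp
next
  case (Suc n)
  have split: "(\<Sum>j<Suc n. e j * N ^ j) = e 0 + N * (\<Sum>j<n. e (Suc j) * N ^ j)" for e
    unfolding sum.lessThan_Suc_shift by (simp add: sum_distrib_left mult.left_commute)
  have d0: "d 0 < N" "d' 0 < N" using Suc.prems by auto
  let ?s = "\<Sum>j<n. d (Suc j) * N ^ j" and ?s' = "\<Sum>j<n. d' (Suc j) * N ^ j"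
  from Suc.prems(3) have eq: "d 0 + N * ?s = d' 0 + N * ?s'" by (simp only: split)
  have "(d 0 + N * ?s) mod N = d 0" using d0 by simp
  moreover have "(d' 0 + N * ?s') mod N = d' 0" using d0 by simp
  ultimately have e0: "d 0 = d' 0" using eq by simp
  then have "N * ?s = N * ?s'" using eq by simp
  moreover have "N > 0" using d0 by simp
  ultimately have ss: "?s = ?s'" by simp
  have p1: "\<forall>j<n. d (Suc j) < N" using Suc.prems(1) by auto
  have p2: "\<forall>j<n. d' (Suc j) < N" using Suc.prems(2) by auto
  have "\<forall>j<n. d (Suc j) = d' (Suc j)"
    by (rule Suc.IH[OF p1 p2 ss])
  then show ?case using e0 by (auto simp: less_Suc_eq_0_disj)
qed

lemma meval_eq_0_imp:
  fixes g :: "'n::finite mpoly"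
  assumes "\<forall>x. meval g x = 0" shows "g = 0"
proof (rule ccontr)
  assume "g \<noteq> 0"
  let ?K = "Poly_Mapping.keys g"
  obtain m0 where m0: "m0 \<in> ?K" using \<open>g \<noteq> 0\<close> keys_eq_empty by blast
  define N where "N = Suc (Max (mdeg ` ?K))"
  have Nb: "Poly_Mapping.lookup m i < N" if "m \<in> ?K" for m i
  proof -
    have "mdeg m \<le> Max (mdeg ` ?K)" using that by (intro Max_ge) auto
    then show ?thesis using lookup_le_mdeg[of m i] unfolding N_def by simp
  qed
  obtain h :: "'n \<Rightarrow> nat" where h: "bij_betw h UNIV {0..<CARD('n)}"
    using ex_bij_betw_finite_nat[of "UNIV::'n set"] by auto
  define hi where "hi = inv_into UNIV h"
  have hih: "hi (h i) = i" for i
    unfolding hi_def using h by (simp add: bij_betw_def inv_into_f_f)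
  have hlt: "h i < CARD('n)" for i
    using h by (auto simp: bij_betw_def)
  define e where "e m = (\<Sum>i\<in>UNIV. Poly_Mapping.lookup m i * N ^ h i)" for m :: "'n \<Rightarrow>\<^sub>0 nat"
  have re: "e m = (\<Sum>j<CARD('n). Poly_Mapping.lookup m (hi j) * N ^ j)" for m
  proof -
    have "e m = (\<Sum>i\<in>UNIV. (\<lambda>j. Poly_Mapping.lookup m (hi j) * N ^ j) (h i))"
      unfolding e_def by (simp add: hih)
    also have "\<dots> = (\<Sum>j\<in>{0..<CARD('n)}. Poly_Mapping.lookup m (hi j) * N ^ j)"
      by (rule sum.reindex_bij_betw[OF h])
    finally show ?thesis by (simp add: atLeast0LessThan)
  qed
  have einj: "inj_on e ?K"
  proof
    fix m m' assume mm: "m \<in> ?K" "m' \<in> ?K" "e m = e m'"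
    have "\<forall>j<CARD('n). Poly_Mapping.lookup m (hi j) = Poly_Mapping.lookup m' (hi j)"
    proof (rule digits_inj)
      show "\<forall>j<CARD('n). Poly_Mapping.lookup m (hi j) < N" using mm(1) Nb by blast
      show "\<forall>j<CARD('n). Poly_Mapping.lookup m' (hi j) < N" using mm(2) Nb by blast
      show "(\<Sum>j<CARD('n). Poly_Mapping.lookup m (hi j) * N ^ j) = (\<Sum>j<CARD('n). Poly_Mapping.lookup m' (hi j) * N ^ j)"
        using mm(3) unfolding re .
    qed
    then have "Poly_Mapping.lookup m (hi (h i)) = Poly_Mapping.lookup m' (hi (h i))" for i
      using hlt[of i] by blast
    then have "Poly_Mapping.lookup m i = Poly_Mapping.lookup m' i" for i
      unfolding hih .
    then show "m = m'" by (rule poly_mapping_eqI)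
  qed
  define P where "P = (\<Sum>m\<in>?K. monom (Poly_Mapping.lookup g m) (e m))"
  have "poly P t = 0" for t
  proof -
    define x :: "real^'n" where "x = (\<chi> i. t ^ (N ^ h i))"
    have pw: "(t ^ (N ^ h i)) ^ k = t ^ (k * N ^ h i)" for i k
      by (metis power_mult mult.commute)
    have mx: "mon x m = t ^ e m" for m
      unfolding mon_def e_def x_def power_sum by (simp add: pw)
    have "poly P t = (\<Sum>m\<in>?K. Poly_Mapping.lookup g m * t ^ e m)"
      unfolding P_def by (simp add: poly_sum poly_monom)
    also have "\<dots> = meval g x"
      unfolding meval_def mon_def[symmetric] mx ..
    finally show ?thesis using assms by simp
  qed
  then have "P = 0" using poly_all_0_iff_0 by blast
  then have "0 = coeff P (e m0)" by simp
  also have "\<dots> = (\<Sum>m\<in>?K. if e m = e m0 then Poly_Mapping.lookup g m else 0)"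
    unfolding P_def coeff_sum coeff_monom ..
  also have "\<dots> = (\<Sum>m\<in>?K. if m = m0 then Poly_Mapping.lookup g m else 0)"
    by (intro sum.cong refl) (use einj m0 in \<open>auto dest: inj_onD\<close>)
  also have "\<dots> = Poly_Mapping.lookup g m0"
    using m0 by (simp add: sum.delta')
  finally show False using m0 by (simp add: in_keys_iff)
qed

lemma meval_inj:
  fixes f g :: "'n::finite mpoly"
  assumes "\<And>x. meval f x = meval g x" shows "f = g"
  using meval_eq_0_imp[of "f - g"] assms by (simp add: meval_diff)

lemma cs_lagrange:
  fixes W t :: "'a \<Rightarrow> real"
  shows "(\<Sum>s\<in>S. \<Sum>s'\<in>S. W s * W s' * (t s - t s')\<^sup>2) =
    2 * ((\<Sum>s\<in>S. W s) * (\<Sum>s\<in>S. W s * (t s)\<^sup>2) - (\<Sum>s\<in>S. W s * t s)\<^sup>2)"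
proof -
  have e: "W s * W s' * (t s - t s')\<^sup>2 = (W s * (t s)\<^sup>2) * W s' + W s * (W s' * (t s')\<^sup>2) - (2 * (W s * t s)) * (W s' * t s')" for s s'
    by (simp add: power2_eq_square algebra_simps)
  have "(\<Sum>s\<in>S. \<Sum>s'\<in>S. W s * W s' * (t s - t s')\<^sup>2) =
     (\<Sum>s\<in>S. \<Sum>s'\<in>S. (W s * (t s)\<^sup>2) * W s') + (\<Sum>s\<in>S. \<Sum>s'\<in>S. W s * (W s' * (t s')\<^sup>2)) - (\<Sum>s\<in>S. \<Sum>s'\<in>S. (2 * (W s * t s)) * (W s' * t s'))"
    by (simp only: e sum.distrib sum_subtractf)
  also have "\<dots> = (\<Sum>s\<in>S. W s * (t s)\<^sup>2) * (\<Sum>s\<in>S. W s) + (\<Sum>s\<in>S. W s) * (\<Sum>s\<in>S. W s * (t s)\<^sup>2) - (\<Sum>s\<in>S. 2 * (W s * t s)) * (\<Sum>s\<in>S. W s * t s)"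
    by (simp only: sum_product)
  also have "(\<Sum>s\<in>S. 2 * (W s * t s)) = 2 * (\<Sum>s\<in>S. W s * t s)"
    by (simp add: sum_distrib_left)
  finally show ?thesis by (simp add: power2_eq_square algebra_simps)
qed

lemma cs_weighted:
  fixes W t :: "'a \<Rightarrow> real"
  assumes "\<forall>s\<in>S. W s > 0"
  shows "(\<Sum>s\<in>S. W s * t s)\<^sup>2 \<le> (\<Sum>s\<in>S. W s) * (\<Sum>s\<in>S. W s * (t s)\<^sup>2)"
proof -
  have "0 \<le> (\<Sum>s\<in>S. \<Sum>s'\<in>S. W s * W s' * (t s - t s')\<^sup>2)"
    using assms by (intro sum_nonneg) (auto intro!: mult_nonneg_nonneg)
  then show ?thesis unfolding cs_lagrange by simp
qed

lemma cs_weighted_eq: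
  fixes W t :: "'a \<Rightarrow> real"
  assumes "finite S" "\<forall>s\<in>S. W s > 0"
    and "(\<Sum>s\<in>S. W s * t s)\<^sup>2 = (\<Sum>s\<in>S. W s) * (\<Sum>s\<in>S. W s * (t s)\<^sup>2)"
  shows "\<forall>s\<in>S. \<forall>s'\<in>S. t s = t s'"
proof (intro ballI)
  fix s s' assume ss: "s \<in> S" "s' \<in> S"
  have z: "(\<Sum>s\<in>S. \<Sum>s'\<in>S. W s * W s' * (t s - t s')\<^sup>2) = 0"
    unfolding cs_lagrange using assms(3) by simp
  have nn: "0 \<le> W s * W s' * (t s - t s')\<^sup>2" if "s \<in> S" "s' \<in> S" for s s'
    using assms(2) that by (auto intro!: mult_nonneg_nonneg)
  have "\<forall>s\<in>S. (\<Sum>s'\<in>S. W s * W s' * (t s - t s')\<^sup>2) = 0"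
    using z assms(1) nn by (subst (asm) sum_nonneg_eq_0_iff) (auto intro!: sum_nonneg)
  then have "(\<Sum>s'\<in>S. W s * W s' * (t s - t s')\<^sup>2) = 0" using ss by blast
  then have "W s * W s' * (t s - t s')\<^sup>2 = 0"
    using assms(1) nn ss by (subst (asm) sum_nonneg_eq_0_iff) auto
  then show "t s = t s'" using assms(2) ss by auto
qed

definition Sm :: "nat \<Rightarrow> nat \<Rightarrow> ('n::finite \<Rightarrow>\<^sub>0 nat) \<Rightarrow> (('n \<Rightarrow>\<^sub>0 nat) \<times> ('n \<Rightarrow>\<^sub>0 nat)) set" where
  "Sm p q m = {x \<in> Dg p \<times> Dg q. fst x + snd x = m}"

lemma finite_Sm: "finite (Sm p q m)"
  unfolding Sm_def by (rule finite_subset[of _ "Dg p \<times> Dg q"]) (auto simp: finite_Dg)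

lemma sum_pairs_filter:
  assumes "finite A" "finite B"
  shows "(\<Sum>a\<in>A. \<Sum>b\<in>B. if a + b = m then F a b else (0::real)) =
    (\<Sum>x\<in>{x \<in> A \<times> B. fst x + snd x = m}. F (fst x) (snd x))"
proof -
  have "(\<Sum>x\<in>{x \<in> A \<times> B. fst x + snd x = m}. F (fst x) (snd x)) =
     (\<Sum>x\<in>A \<times> B. if fst x + snd x = m then F (fst x) (snd x) else 0)"
    by (rule sum.inter_filter) (use assms in simp)
  also have "\<dots> = (\<Sum>a\<in>A. \<Sum>b\<in>B. if a + b = m then F a b else 0)"
    unfolding sum.cartesian_product by (simp add: split_def)
  finally show ?thesis by simp
qed

lemma lookup_mult_Sm:
  fixes f g :: "'n::finite mpoly"
  assumes "homogeneous p f" "homogeneous q g"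
  shows "Poly_Mapping.lookup (f * g) m = (\<Sum>x\<in>Sm p q m. Poly_Mapping.lookup f (fst x) * Poly_Mapping.lookup g (snd x))"
proof -
  have "Poly_Mapping.lookup (f * g) m = (\<Sum>a\<in>Dg p. \<Sum>b\<in>Dg q. if a + b = m then Poly_Mapping.lookup f a * Poly_Mapping.lookup g b else 0)"
    by (rule lookup_mult_sum) (use assms finite_Dg in \<open>auto simp: homogeneous_keys\<close>)
  then show ?thesis unfolding Sm_def by (simp add: sum_pairs_filter finite_Dg)
qed

lemma MM_Sm:
  assumes "mdeg (m :: 'n::finite \<Rightarrow>\<^sub>0 nat) = p + q"
  shows "MM m = (\<Sum>x\<in>Sm p q m. MM (fst x) * MM (snd x))"
  using MM_conv[OF assms] unfolding Sm_def by (simp add: sum_pairs_filter finite_Dg)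

lemma hs_sq:
  assumes "homogeneous d g"
  shows "(hs_norm g)\<^sup>2 = (\<Sum>m\<in>Dg d. (Poly_Mapping.lookup g m)\<^sup>2 * wt m)"
proof -
  have "0 \<le> (\<Sum>m\<in>Dg d. (Poly_Mapping.lookup g m)\<^sup>2 * wt m)"
    by (intro sum_nonneg mult_nonneg_nonneg zero_le_power2 less_imp_le[OF wt_pos])
  then show ?thesis using hs_norm_Dg[OF assms] by simp
qed

lemma hs_norm_nonneg: "hs_norm g \<ge> 0"
  unfolding hs_norm_def by (intro real_sqrt_ge_zero sum_nonneg divide_nonneg_nonneg mult_nonneg_nonneg prod_nonneg) auto

lemma hs_mult_sq:
  fixes f g :: "'n::finite mpoly"
  assumes hf: "homogeneous p f" and hg: "homogeneous q g"
  defines "Q \<equiv> \<lambda>x. (Poly_Mapping.lookup f (fst x))\<^sup>2 * wt (fst x) * ((Poly_Mapping.lookup g (snd x))\<^sup>2 * wt (snd x))"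
  defines "t \<equiv> \<lambda>x. Poly_Mapping.lookup f (fst x) * wt (fst x) * (Poly_Mapping.lookup g (snd x) * wt (snd x))"
  shows "(hs_norm (f * g))\<^sup>2 \<le> (hs_norm f)\<^sup>2 * (hs_norm g)\<^sup>2"
    and "(hs_norm (f * g))\<^sup>2 = (hs_norm f)\<^sup>2 * (hs_norm g)\<^sup>2 \<Longrightarrow>
           \<forall>m\<in>Dg (p + q). \<forall>x\<in>Sm p q m. \<forall>y\<in>Sm p q m. t x = t y"
proof -
  define W :: "('n \<Rightarrow>\<^sub>0 nat) \<times> ('n \<Rightarrow>\<^sub>0 nat) \<Rightarrow> real" where "W = (\<lambda>x. MM (fst x) * MM (snd x))"
  have Wpos: "\<forall>x\<in>S. W x > 0" for S unfolding W_def using MM_pos by (auto intro!: mult_pos_pos)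
  have Wt: "W x * t x = Poly_Mapping.lookup f (fst x) * Poly_Mapping.lookup g (snd x)" for x
    unfolding W_def t_def using MM_wt[of "fst x"] MM_wt[of "snd x"]
    by (simp add: algebra_simps) (metis mult.assoc mult.commute mult_1)
  have Wt2: "W x * (t x)\<^sup>2 = Q x" for x
    unfolding W_def t_def Q_def using MM_wt[of "fst x"] MM_wt[of "snd x"]
    by (simp add: power2_eq_square algebra_simps) (metis mult.assoc mult.commute mult_1)
  define D where "D = (\<lambda>m. (\<Sum>x\<in>Sm p q m. Q x) - (Poly_Mapping.lookup (f * g) m)\<^sup>2 * wt m)"
  have key: "(Poly_Mapping.lookup (f * g) m)\<^sup>2 * MM m = (\<Sum>x\<in>Sm p q m. W x * t x)\<^sup>2 * MM m"
    for m using lookup_mult_Sm[OF hf hg] Wt by simp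
  have Dnn: "D m \<ge> 0" and Deq: "D m = 0 \<Longrightarrow> \<forall>x\<in>Sm p q m. \<forall>y\<in>Sm p q m. t x = t y"
    if m: "m \<in> Dg (p + q)" for m
  proof -
    have MMm: "MM m = (\<Sum>x\<in>Sm p q m. W x)" using MM_Sm[of m p q] m unfolding W_def Dg_def by simp
    have fg: "Poly_Mapping.lookup (f * g) m = (\<Sum>x\<in>Sm p q m. W x * t x)"
      using lookup_mult_Sm[OF hf hg] Wt by simp
    have sQ: "(\<Sum>x\<in>Sm p q m. Q x) = (\<Sum>x\<in>Sm p q m. W x * (t x)\<^sup>2)" using Wt2 by simp
    have wm: "wt m * MM m = 1" using MM_wt[of m] by (simp add: mult.commute)
    have D': "D m = wt m * ((\<Sum>x\<in>Sm p q m. W x) * (\<Sum>x\<in>Sm p q m. W x * (t x)\<^sup>2) - (\<Sum>x\<in>Sm p q m. W x * t x)\<^sup>2)"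
      unfolding D_def sQ fg MMm[symmetric] using wm by (simp add: algebra_simps)
    have cs: "(\<Sum>x\<in>Sm p q m. W x * t x)\<^sup>2 \<le> (\<Sum>x\<in>Sm p q m. W x) * (\<Sum>x\<in>Sm p q m. W x * (t x)\<^sup>2)"
      by (rule cs_weighted[OF Wpos])
    show "D m \<ge> 0" unfolding D' using cs wt_pos[of m] by simp
    assume "D m = 0"
    then have "(\<Sum>x\<in>Sm p q m. W x * t x)\<^sup>2 = (\<Sum>x\<in>Sm p q m. W x) * (\<Sum>x\<in>Sm p q m. W x * (t x)\<^sup>2)"
      unfolding D' using wt_pos[of m] by simp
    then show "\<forall>x\<in>Sm p q m. \<forall>y\<in>Sm p q m. t x = t y"
      by (rule cs_weighted_eq[OF finite_Sm Wpos])
  qed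
  have hfg: "homogeneous (p + q) (f * g)" by (rule homogeneous_mult[OF hf hg])
  have grp: "(\<Sum>m\<in>Dg (p + q). \<Sum>x\<in>Sm p q m. Q x) = (\<Sum>x\<in>Dg p \<times> Dg q. Q x)"
    unfolding Sm_def
    by (rule sum.group[of "Dg p \<times> Dg q" "Dg (p + q)" "\<lambda>x. fst x + snd x" Q, simplified])
       (auto simp: finite_Dg finite_Dg[unfolded Dg_def] Dg_def mdeg_add)
  have prod: "(\<Sum>x\<in>Dg p \<times> Dg q. Q x) = (hs_norm f)\<^sup>2 * (hs_norm g)\<^sup>2"
    unfolding hs_sq[OF hf] hs_sq[OF hg] Q_def sum_product sum.cartesian_product by (simp add: split_def)
  have tot: "(hs_norm f)\<^sup>2 * (hs_norm g)\<^sup>2 - (hs_norm (f * g))\<^sup>2 = (\<Sum>m\<in>Dg (p + q). D m)"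
    unfolding D_def sum_subtractf grp prod hs_sq[OF hfg] ..
  have "(\<Sum>m\<in>Dg (p + q). D m) \<ge> 0" using Dnn by (intro sum_nonneg) auto
  then show "(hs_norm (f * g))\<^sup>2 \<le> (hs_norm f)\<^sup>2 * (hs_norm g)\<^sup>2" using tot by simp
  assume "(hs_norm (f * g))\<^sup>2 = (hs_norm f)\<^sup>2 * (hs_norm g)\<^sup>2"
  then have "(\<Sum>m\<in>Dg (p + q). D m) = 0" using tot by simp
  then have "\<forall>m\<in>Dg (p + q). D m = 0" using Dnn finite_Dg by (subst (asm) sum_nonneg_eq_0_iff) auto
  then show "\<forall>m\<in>Dg (p + q). \<forall>x\<in>Sm p q m. \<forall>y\<in>Sm p q m. t x = t y" using Deq by blast
qed

lemma mdeg_remove: "mdeg (a :: 'n::finite \<Rightarrow>\<^sub>0 nat) = Poly_Mapping.lookup a j + (\<Sum>i\<in>UNIV - {j}. Poly_Mapping.lookup a i)"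
  unfolding mdeg_def by (rule sum.remove) auto

lemma keys_nonempty_ex: "(g::'a mpoly) \<noteq> 0 \<Longrightarrow> \<exists>b. b \<in> Poly_Mapping.keys g"
  using keys_eq_empty by blast

lemma rank_one_of_eq:
  fixes f g :: "'n::finite mpoly"
  assumes hf: "homogeneous p f" and hg: "homogeneous q g" and q1: "q \<ge> 1"
    and f0: "f \<noteq> 0" and g0: "g \<noteq> 0"
    and eq: "(hs_norm (f * g))\<^sup>2 = (hs_norm f)\<^sup>2 * (hs_norm g)\<^sup>2"
  shows "\<exists>\<alpha> c. \<alpha> \<noteq> 0 \<and> c \<noteq> 0 \<and> (\<forall>x. meval f x = \<alpha> * (c \<bullet> x) ^ p)"
proof -
  define \<phi> where "\<phi> a = Poly_Mapping.lookup f a * wt a" for a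
  define \<psi> where "\<psi> b = Poly_Mapping.lookup g b * wt b" for b
  have T: "\<forall>m\<in>Dg (p + q). \<forall>x\<in>Sm p q m. \<forall>y\<in>Sm p q m. \<phi> (fst x) * \<psi> (snd x) = \<phi> (fst y) * \<psi> (snd y)"
    using hs_mult_sq(2)[OF hf hg eq] unfolding \<phi>_def \<psi>_def .
  have ex: "\<phi> a * \<psi> b = \<phi> a' * \<psi> b'"
    if "a \<in> Dg p" "b \<in> Dg q" "a' \<in> Dg p" "b' \<in> Dg q" "a + b = a' + b'" for a b a' b'
  proof -
    have m: "a + b \<in> Dg (p + q)" using that by (simp add: Dg_def mdeg_add)
    have "(a, b) \<in> Sm p q (a + b)" "(a', b') \<in> Sm p q (a + b)" using that by (auto simp: Sm_def)
    then show ?thesis using T m by fastforce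
  qed
  obtain b1 where b1: "b1 \<in> Poly_Mapping.keys g" using keys_nonempty_ex[OF g0] by blast
  have b1q: "b1 \<in> Dg q" using b1 hg by (auto simp: homogeneous_keys)
  have psi1: "\<psi> b1 \<noteq> 0" using b1 wt_pos[of b1] by (simp add: \<psi>_def in_keys_iff)
  have "\<exists>j. 1 \<le> Poly_Mapping.lookup b1 j"
  proof (rule ccontr)
    assume "\<not> (\<exists>j. 1 \<le> Poly_Mapping.lookup b1 j)"
    then have "\<forall>i. Poly_Mapping.lookup b1 i = 0" by (metis less_one not_less)
    then have "mdeg b1 = 0" by (simp add: mdeg_def)
    then show False using b1q q1 by (simp add: Dg_def)
  qed
  then obtain j where j: "1 \<le> Poly_Mapping.lookup b1 j" by blast
  define b0 where "b0 = b1 - ev j"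
  have b0b1: "b0 + ev j = b1" unfolding b0_def using pm_minus_ev_add[OF j] .
  have b0deg: "mdeg b0 = q - 1" using mdeg_add[of b0 "ev j"] b0b1 b1q by (simp add: Dg_def)
  define c :: "real^'n" where "c = (\<chi> i. \<psi> (b0 + ev i) / \<psi> b1)"
  have cj: "c $ j = 1" using psi1 by (simp add: c_def b0b1)
  then have c0: "c \<noteq> 0" by auto
  have key: "\<phi> (a + ev i) = c $ i * \<phi> (a + ev j)" if a: "mdeg a = p - 1" and p1: "p \<ge> 1" for a i
  proof -
    have "\<phi> (a + ev i) * \<psi> (b0 + ev j) = \<phi> (a + ev j) * \<psi> (b0 + ev i)"
    proof (rule ex)
      show "a + ev i \<in> Dg p" "a + ev j \<in> Dg p" using a p1 by (simp_all add: Dg_def mdeg_add)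
      show "b0 + ev j \<in> Dg q" "b0 + ev i \<in> Dg q" using b0deg q1 by (simp_all add: Dg_def mdeg_add)
      show "a + ev i + (b0 + ev j) = a + ev j + (b0 + ev i)" by (simp add: ac_simps)
    qed
    then show ?thesis using psi1 by (simp add: c_def b0b1 field_simps)
  qed
  define a0 where "a0 = Poly_Mapping.single j p"
  have claim: "\<phi> a = \<phi> a0 * mon c a" if "a \<in> Dg p" for a
  proof -
    have "\<forall>a. mdeg a = p \<longrightarrow> p - Poly_Mapping.lookup a j = k \<longrightarrow> \<phi> a = \<phi> a0 * mon c a" for k
    proof (induction k)
      case 0
      show ?case
      proof (intro allI impI)
        fix a assume a: "mdeg a = p" "p - Poly_Mapping.lookup a j = 0"
        have aj: "Poly_Mapping.lookup a j = p" using a lookup_le_mdeg[of a j] by simp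
        have rest: "(\<Sum>i\<in>UNIV - {j}. Poly_Mapping.lookup a i) = 0" using mdeg_remove[of a j] a aj by simp
        have oth: "Poly_Mapping.lookup a i = 0" if "i \<noteq> j" for i
          using rest that by (subst (asm) sum_eq_0_iff) auto
        have "a = a0"
          by (rule poly_mapping_eqI) (auto simp: a0_def lookup_single when_def aj oth)
        moreover have "mon c a = 1"
        proof -
          have "mon c a = (\<Prod>i\<in>UNIV. if i = j then c $ j ^ p else 1)"
            unfolding mon_def by (intro prod.cong refl) (auto simp: aj oth)
          then show ?thesis by (simp add: cj)
        qed
        ultimately show "\<phi> a = \<phi> a0 * mon c a" by simp
      qed
    next
      case (Suc k)
      show ?case
      proof (intro allI impI)
        fix a assume a: "mdeg a = p" "p - Poly_Mapping.lookup a j = Suc k"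
        have "\<exists>i. i \<noteq> j \<and> 1 \<le> Poly_Mapping.lookup a i"
        proof (rule ccontr)
          assume "\<not> (\<exists>i. i \<noteq> j \<and> 1 \<le> Poly_Mapping.lookup a i)"
          then have "\<forall>i\<in>UNIV - {j}. Poly_Mapping.lookup a i = 0" by auto
          then have "mdeg a = Poly_Mapping.lookup a j" using mdeg_remove[of a j] by simp
          then show False using a by simp
        qed
        then obtain i where i: "i \<noteq> j" "1 \<le> Poly_Mapping.lookup a i" by blast
        define a' where "a' = a - ev i"
        have aa': "a' + ev i = a" unfolding a'_def using pm_minus_ev_add[OF i(2)] .
        have p1: "p \<ge> 1" using a by simp
        have a'deg: "mdeg a' = p - 1" using mdeg_add[of a' "ev i"] aa' a by simp
        have "\<phi> a = c $ i * \<phi> (a' + ev j)" using key[OF a'deg p1, of i] aa' by simp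
        moreover have "\<phi> (a' + ev j) = \<phi> a0 * mon c (a' + ev j)"
        proof -
          have "mdeg (a' + ev j) = p" using a'deg p1 by (simp add: mdeg_add)
          moreover have "p - Poly_Mapping.lookup (a' + ev j) j = k"
            using a i by (simp add: a'_def lookup_add lookup_minus lookup_ev)
          ultimately show ?thesis using Suc.IH by blast
        qed
        moreover have "mon c (a' + ev j) = mon c a'" by (simp add: mon_add mon_ev cj)
        moreover have "mon c a = c $ i * mon c a'" using mon_add[of c a' "ev i"] aa' by (simp add: mon_ev)
        ultimately show "\<phi> a = \<phi> a0 * mon c a" by simp
      qed
    qed
    then show ?thesis using that by (auto simp: Dg_def)
  qed
  have fa: "Poly_Mapping.lookup f a = \<phi> a0 * MM a * mon c a" if "a \<in> Dg p" for a
  proof -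
    have "Poly_Mapping.lookup f a = \<phi> a * MM a"
      unfolding \<phi>_def using MM_wt[of a] by (simp add: algebra_simps)
    then show ?thesis using claim[OF that] by simp
  qed
  have mev: "meval f x = \<phi> a0 * (c \<bullet> x) ^ p" for x
  proof -
    have "meval f x = (\<Sum>a\<in>Dg p. Poly_Mapping.lookup f a * mon x a)"
      by (rule meval_superset) (use hf finite_Dg in \<open>auto simp: homogeneous_keys\<close>)
    also have "\<dots> = \<phi> a0 * (\<Sum>a\<in>Dg p. MM a * mon c a * mon x a)"
      by (simp add: fa sum_distrib_left algebra_simps)
    finally show ?thesis by (simp add: multinomial)
  qed
  have "\<phi> a0 \<noteq> 0"
  proof
    assume z: "\<phi> a0 = 0"
    have "Poly_Mapping.lookup f a = 0" for a
    proof (cases "a \<in> Dg p")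
      case True then show ?thesis using fa z by simp
    next
      case False then show ?thesis using hf by (auto simp: homogeneous_keys in_keys_iff)
    qed
    then have "f = 0" by (intro poly_mapping_eqI) simp
    then show False using f0 by simp
  qed
  then show ?thesis using c0 mev by blast
qed

lemma mon_scale: "mon (r *\<^sub>R x) m = r ^ mdeg m * mon x m"
  unfolding mon_def mdeg_def by (simp add: power_mult_distrib prod.distrib power_sum)

lemma meval_scale:
  assumes "homogeneous d g"
  shows "meval g (r *\<^sub>R x) = r ^ d * meval g x"
proof -
  have "meval g (r *\<^sub>R x) = (\<Sum>m\<in>Dg d. Poly_Mapping.lookup g m * mon (r *\<^sub>R x) m)"
    by (rule meval_superset) (use assms finite_Dg in \<open>auto simp: homogeneous_keys\<close>)
  also have "\<dots> = r ^ d * (\<Sum>m\<in>Dg d. Poly_Mapping.lookup g m * mon x m)"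
    by (simp add: sum_distrib_left mon_scale Dg_def algebra_simps)
  also have "(\<Sum>m\<in>Dg d. Poly_Mapping.lookup g m * mon x m) = meval g x"
    by (rule meval_superset[symmetric]) (use assms finite_Dg in \<open>auto simp: homogeneous_keys\<close>)
  finally show ?thesis .
qed

lemma meval_bound:
  assumes hg: "homogeneous d g" and x: "norm x = 1"
  shows "\<bar>meval g x\<bar> \<le> hs_norm g"
proof -
  have sw: "sqrt (wt m) * sqrt (MM m) = 1" for m
    using MM_wt[of m] by (simp add: real_sqrt_mult[symmetric] mult.commute)
  have "meval g x = (\<Sum>m\<in>Dg d. Poly_Mapping.lookup g m * mon x m)"
    by (rule meval_superset) (use hg finite_Dg in \<open>auto simp: homogeneous_keys\<close>)
  also have "\<dots> = (\<Sum>m\<in>Dg d. (Poly_Mapping.lookup g m * sqrt (wt m)) * (sqrt (MM m) * mon x m))"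
  proof (intro sum.cong refl)
    fix m
    have "Poly_Mapping.lookup g m * sqrt (wt m) * (sqrt (MM m) * mon x m) = Poly_Mapping.lookup g m * mon x m * (sqrt (wt m) * sqrt (MM m))"
      by (simp add: algebra_simps)
    then show "Poly_Mapping.lookup g m * mon x m = Poly_Mapping.lookup g m * sqrt (wt m) * (sqrt (MM m) * mon x m)"
      by (simp add: sw)
  qed
  finally have e: "meval g x = (\<Sum>m\<in>Dg d. (Poly_Mapping.lookup g m * sqrt (wt m)) * (sqrt (MM m) * mon x m))" .
  have s1: "(\<Sum>m\<in>Dg d. (Poly_Mapping.lookup g m * sqrt (wt m))\<^sup>2) = (hs_norm g)\<^sup>2"
    unfolding hs_sq[OF hg] by (intro sum.cong refl) (simp add: power_mult_distrib less_imp_le[OF wt_pos])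
  have s2: "(\<Sum>m\<in>Dg d. (sqrt (MM m) * mon x m)\<^sup>2) = 1"
  proof -
    have "(\<Sum>m\<in>Dg d. (sqrt (MM m) * mon x m)\<^sup>2) = (\<Sum>m\<in>Dg d. MM m * mon x m * mon x m)"
      by (intro sum.cong refl) (simp add: power_mult_distrib power2_eq_square less_imp_le[OF MM_pos])
    also have "\<dots> = (x \<bullet> x) ^ d" by (rule multinomial)
    also have "x \<bullet> x = 1" using x by (simp add: power2_norm_eq_inner[symmetric])
    finally show ?thesis by simp
  qed
  have "(meval g x)\<^sup>2 \<le> (hs_norm g)\<^sup>2"
    using Cauchy_Schwarz_ineq_sum[of "\<lambda>m. Poly_Mapping.lookup g m * sqrt (wt m)" "\<lambda>m. sqrt (MM m) * mon x m" "Dg d"]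
    unfolding e[symmetric] s1 s2 by simp
  then have "\<bar>meval g x\<bar>\<^sup>2 \<le> (hs_norm g)\<^sup>2" by simp
  then show ?thesis by (rule power2_le_imp_le) (rule hs_norm_nonneg)
qed

lemma unit_ex: "\<exists>x::real^'n. norm x = 1"
  by (rule exI[of _ "axis undefined 1"]) simp

lemma sigma_nonempty: "{\<bar>meval g x\<bar> | x. norm x = 1} \<noteq> {}"
  using unit_ex by blast

lemma sigma_upper:
  assumes "homogeneous d g" "norm x = 1"
  shows "\<bar>meval g x\<bar> \<le> sigma_norm g"
  unfolding sigma_norm_def
  by (rule cSup_upper) (use assms meval_bound in \<open>auto intro!: bdd_aboveI[of _ "hs_norm g"]\<close>)

lemma sigma_least:
  assumes "\<And>x. norm x = 1 \<Longrightarrow> \<bar>meval g x\<bar> \<le> B"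
  shows "sigma_norm g \<le> B"
  unfolding sigma_norm_def
  by (rule cSup_least) (use assms sigma_nonempty in auto)

lemma sigma_le_hs: "homogeneous d g \<Longrightarrow> sigma_norm g \<le> hs_norm g"
  by (rule sigma_least) (rule meval_bound)

lemma sigma_nonneg: "homogeneous d g \<Longrightarrow> 0 \<le> sigma_norm g"
proof -
  assume h: "homogeneous d g"
  obtain x :: "real^'a" where "norm x = 1" using unit_ex by blast
  then show ?thesis using order_trans[OF abs_ge_zero sigma_upper[OF h]] by blast
qed

lemma finite_roots_real:
  assumes "k \<ge> 1"
  shows "finite {z::real. z ^ k = C}"
proof -
  have "{z::real. z ^ k = C} \<subseteq> {root k \<bar>C\<bar>, - root k \<bar>C\<bar>}"
  proof
    fix z :: real assume "z \<in> {z. z ^ k = C}"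
    then have zk: "z ^ k = C" by simp
    have "\<bar>z\<bar> ^ k = \<bar>C\<bar>" using zk by (metis power_abs)
    have r: "(root k \<bar>C\<bar>) ^ k = \<bar>C\<bar>" using assms by simp
    have "\<bar>z\<bar> = root k \<bar>C\<bar>"
      using power_eq_imp_eq_base[of "\<bar>z\<bar>" k "root k \<bar>C\<bar>"] \<open>\<bar>z\<bar> ^ k = \<bar>C\<bar>\<close> r assms by simp
    then show "z \<in> {root k \<bar>C\<bar>, - root k \<bar>C\<bar>}" by (cases "z \<ge> 0") auto
  qed
  then show ?thesis by (rule finite_subset) simp
qed

lemma continuous_meval_line: "continuous_on UNIV (\<lambda>t::real. meval f (y + t *\<^sub>R v))"
proof -
  have eq: "(\<lambda>t::real. meval f (y + t *\<^sub>R v)) = (\<lambda>t. \<Sum>m\<in>Poly_Mapping.keys f. Poly_Mapping.lookup f m * (\<Prod>i\<in>UNIV. (y $ i + t * v $ i) ^ Poly_Mapping.lookup m i))"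
    by (simp add: meval_def)
  show ?thesis unfolding eq
    by (intro continuous_on_sum continuous_on_mult continuous_on_prod continuous_on_power continuous_on_add continuous_on_const continuous_on_id)
qed

lemma power_rank_one:
  fixes f :: "'n::finite mpoly"
  assumes hf: "homogeneous p f" and k1: "k \<ge> 1" and \<alpha>: "\<alpha> \<noteq> 0" and c0: "c \<noteq> 0"
    and hk: "\<forall>x. meval (f ^ k) x = \<alpha> * (c \<bullet> x) ^ (k * p)"
  shows "\<exists>\<beta>. \<beta> \<noteq> 0 \<and> (\<forall>x. meval f x = \<beta> * (c \<bullet> x) ^ p)"
proof -
  have Fk: "meval f x ^ k = \<alpha> * (c \<bullet> x) ^ (k * p)" for x using hk meval_power by metis
  have transl: "meval f (y + v) = meval f y" if v: "c \<bullet> v = 0" for y v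
  proof -
    define \<phi> where "\<phi> t = meval f (y + t *\<^sub>R v)" for t
    have ph: "\<phi> t ^ k = \<alpha> * (c \<bullet> y) ^ (k * p)" for t
      unfolding \<phi>_def Fk using v by (simp add: inner_add_right)
    have "\<phi> ` UNIV \<subseteq> {z. z ^ k = \<alpha> * (c \<bullet> y) ^ (k * p)}" using ph by auto
    then have "finite (\<phi> ` UNIV)" using finite_roots_real[OF k1] finite_subset by blast
    moreover have "continuous_on UNIV \<phi>" unfolding \<phi>_def by (rule continuous_meval_line)
    ultimately have "\<phi> constant_on UNIV"
      by (intro continuous_finite_range_constant) auto
    then have "\<phi> 1 = \<phi> 0" unfolding constant_on_def by auto
    then show ?thesis unfolding \<phi>_def by simp
  qed
  have cc: "c \<bullet> c \<noteq> 0" using c0 by simp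
  define \<beta> where "\<beta> = meval f c / (c \<bullet> c) ^ p"
  have main: "meval f x = \<beta> * (c \<bullet> x) ^ p" for x
  proof -
    define s where "s = (c \<bullet> x) / (c \<bullet> c)"
    define v where "v = x - s *\<^sub>R c"
    have cv: "c \<bullet> v = 0" unfolding v_def s_def using cc by (simp add: inner_diff_right)
    have "x = s *\<^sub>R c + v" unfolding v_def by simp
    then have "meval f x = meval f (s *\<^sub>R c)" using transl[OF cv, of "s *\<^sub>R c"] by simp
    also have "\<dots> = s ^ p * meval f c" by (rule meval_scale[OF hf])
    also have "\<dots> = \<beta> * (c \<bullet> x) ^ p" unfolding s_def \<beta>_def by (simp add: power_divide)
    finally show ?thesis .
  qed
  have "meval f c \<noteq> 0"
  proof
    assume "meval f c = 0"
    then have "\<alpha> * (c \<bullet> c) ^ (k * p) = 0" using Fk[of c] k1 by (simp add: power_0_left)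
    then show False using \<alpha> cc by simp
  qed
  then have "\<beta> \<noteq> 0" unfolding \<beta>_def using cc by simp
  then show ?thesis using main by blast
qed

lemma fekete:
  fixes a :: "nat \<Rightarrow> real"
  assumes sub: "\<And>k l. k \<ge> 1 \<Longrightarrow> l \<ge> 1 \<Longrightarrow> a (k + l) \<le> a k + a l"
    and bdd: "\<And>k. k \<ge> 1 \<Longrightarrow> real k * B \<le> a k"
  shows "(\<lambda>k. a k / real k) \<longlonglongrightarrow> (INF k\<in>{1..}. a k / real k)"
proof -
  let ?L = "INF k\<in>{1..}. a k / real k"
  have bb: "bdd_below ((\<lambda>k. a k / real k) ` {1..})"
  proof (rule bdd_belowI[of _ B])
    fix y assume "y \<in> (\<lambda>k. a k / real k) ` {1..}"
    then obtain k where k: "k \<ge> 1" "y = a k / real k" by auto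
    have kp: "real k > 0" using k by simp
    show "B \<le> y" using bdd[OF k(1)] k(2) kp by (simp add: pos_le_divide_eq mult.commute)
  qed
  have low: "?L \<le> a k / real k" if "k \<ge> 1" for k
    by (rule cINF_lower[OF bb]) (use that in auto)
  have it: "a (q * m + r) \<le> real q * a m + a r" if "m \<ge> 1" "r \<ge> 1" for q m r
  proof (induction q)
    case 0 then show ?case by simp
  next
    case (Suc q)
    have "a (Suc q * m + r) = a (m + (q * m + r))" by (simp add: algebra_simps)
    also have "\<dots> \<le> a m + a (q * m + r)" using sub that by simp
    also have "\<dots> \<le> a m + (real q * a m + a r)" using Suc.IH by simp
    finally show ?case by (simp add: algebra_simps)
  qed
  show ?thesis
  proof (rule LIMSEQ_I)
    fix \<epsilon> :: real assume \<epsilon>: "\<epsilon> > 0"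
    have lt: "?L < ?L + \<epsilon> / 2" using \<epsilon> by simp
    have "\<exists>m\<in>{1..}. a m / real m < ?L + \<epsilon> / 2"
      using cINF_less_iff[OF _ bb, of "?L + \<epsilon> / 2"] lt by simp
    then obtain m where m: "m \<in> {1..}" "a m / real m < ?L + \<epsilon> / 2" by blast
    have m1: "m \<ge> 1" using m(1) by simp
    define C where "C = Max ((\<lambda>r. \<bar>a r\<bar>) ` {1..m})"
    have Cb: "\<bar>a r\<bar> \<le> C" if "1 \<le> r" "r \<le> m" for r
      unfolding C_def by (rule Max_ge) (use that in auto)
    have C0: "0 \<le> C" using Cb[of 1] m1 by simp
    define K where "K = \<bar>a m\<bar> + C"
    have K0: "0 \<le> K" unfolding K_def using C0 by simp
    obtain N :: nat where N: "real N > 2 * K / \<epsilon>" using reals_Archimedean2 by blast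
    show "\<exists>no. \<forall>n\<ge>no. norm (a n / real n - ?L) < \<epsilon>"
    proof (intro exI allI impI)
      fix n assume n: "n \<ge> N + 1"
      have n1: "n \<ge> 1" using n by simp
      define q where "q = (n - 1) div m"
      define r where "r = (n - 1) mod m + 1"
      have qr: "n = q * m + r" unfolding q_def r_def using n1 by simp
      have r1: "1 \<le> r" "r \<le> m" unfolding r_def using m1 by (auto simp: Suc_le_eq)
      have qm1: "real q * real m \<le> real n" using qr r1 by simp
      have qm2: "real n \<le> real q * real m + real m" using qr r1 by simp
      have A: "a n \<le> real q * a m + C" using it[OF m1 r1(1), of q] Cb[OF r1] qr by simp
      have B: "real q * a m \<le> real n * (a m / real m) + \<bar>a m\<bar>"
      proof (cases "a m \<ge> 0")
        case True
        have "real q * a m = (real q * real m) * (a m / real m)" using m1 by simp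
        also have "\<dots> \<le> real n * (a m / real m)"
          using qm1 True by (intro mult_right_mono) auto
        finally show ?thesis by simp
      next
        case False
        have "real q * a m = (real q * real m) * (a m / real m)" using m1 by simp
        also have "\<dots> \<le> (real n - real m) * (a m / real m)"
          using qm2 False m1 by (intro mult_right_mono_neg) (auto simp: divide_nonpos_pos)
        also have "\<dots> = real n * (a m / real m) - a m" using m1 by (simp add: field_simps)
        finally show ?thesis using False by simp
      qed
      have npos: "real n > 0" using n1 by simp
      have "a n / real n \<le> a m / real m + K / real n"
      proof -
        have "a n \<le> real n * (a m / real m) + K" using A B unfolding K_def by simp
        then show ?thesis using npos by (simp add: field_simps)
      qed
      moreover have "K / real n < \<epsilon> / 2"
      proof -
        have "real n > 2 * K / \<epsilon>" using N n by simp
        then have "real n * \<epsilon> > 2 * K" using \<epsilon> by (simp add: field_simps)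
        then show ?thesis using npos \<epsilon> by (simp add: field_simps)
      qed
      ultimately have up: "a n / real n < ?L + \<epsilon>" using m(2) by linarith
      have lo: "?L \<le> a n / real n" by (rule low[OF n1])
      show "norm (a n / real n - ?L) < \<epsilon>" using up lo by simp
    qed
  qed
qed

lemma partA:
  fixes f :: "'n::finite mpoly"
  assumes hf: "homogeneous p f" and a: "a \<noteq> 0" and c: "c \<noteq> 0"
    and hx: "\<forall>x. meval f x = a * (c \<bullet> x) ^ p" and k: "k \<ge> 1"
  shows "hs_norm (f ^ k) = \<bar>a\<bar> ^ k * norm c ^ (k * p) \<and> sigma_norm (f ^ k) = \<bar>a\<bar> ^ k * norm c ^ (k * p)"
proof -
  define G where "G = Poly_Mapping.single 0 (a ^ k) * Lc c ^ (k * p)"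
  have mG: "meval G x = a ^ k * (c \<bullet> x) ^ (k * p)" for x
    unfolding G_def by (simp add: meval_mult meval_const meval_Lc_pow)
  have mfk: "meval (f ^ k) x = a ^ k * (c \<bullet> x) ^ (k * p)" for x
    using hx by (simp add: meval_power power_mult_distrib mult.commute[of k p] flip: power_mult)
  have fk: "f ^ k = G" by (rule meval_inj) (simp add: mG mfk)
  have hG: "homogeneous (k * p) G" using homogeneous_power[OF hf, of k] fk by simp
  have lG: "Poly_Mapping.lookup G m = a ^ k * (MM m * mon c m)" if "m \<in> Dg (k * p)" for m
    unfolding G_def lookup_const_mult using that by (simp add: lookup_Lc_pow Dg_def)
  have "(hs_norm G)\<^sup>2 = (\<Sum>m\<in>Dg (k * p). (a ^ k * (MM m * mon c m))\<^sup>2 * wt m)"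
    unfolding hs_sq[OF hG] by (intro sum.cong refl) (simp add: lG)
  also have "\<dots> = (a ^ k)\<^sup>2 * (\<Sum>m\<in>Dg (k * p). MM m * mon c m * mon c m)"
    unfolding sum_distrib_left
  proof (intro sum.cong refl)
    fix m
    have "(a ^ k * (MM m * mon c m))\<^sup>2 * wt m = (a ^ k)\<^sup>2 * (MM m * mon c m * mon c m) * (MM m * wt m)"
      by (simp add: power2_eq_square algebra_simps)
    then show "(a ^ k * (MM m * mon c m))\<^sup>2 * wt m = (a ^ k)\<^sup>2 * (MM m * mon c m * mon c m)"
      by (simp add: MM_wt)
  qed
  also have "\<dots> = (a ^ k)\<^sup>2 * (c \<bullet> c) ^ (k * p)" by (simp add: multinomial)
  also have "\<dots> = (\<bar>a\<bar> ^ k * norm c ^ (k * p))\<^sup>2"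
  proof -
    have e1: "(a ^ k)\<^sup>2 = (\<bar>a\<bar> ^ k)\<^sup>2"
      by (subst power_abs[symmetric]) (rule power2_abs[symmetric])
    have cc: "c \<bullet> c = norm c ^ 2" by (rule power2_norm_eq_inner[symmetric])
    have e2: "(c \<bullet> c) ^ (k * p) = (norm c ^ (k * p))\<^sup>2"
      unfolding cc power_mult[symmetric] by (simp only: mult.commute)
    show ?thesis unfolding e1 e2 by (rule power_mult_distrib[symmetric])
  qed
  finally have hs2: "(hs_norm G)\<^sup>2 = (\<bar>a\<bar> ^ k * norm c ^ (k * p))\<^sup>2" .
  have nn: "0 \<le> \<bar>a\<bar> ^ k * norm c ^ (k * p)" by simp
  have hs: "hs_norm G = \<bar>a\<bar> ^ k * norm c ^ (k * p)"
    by (rule power2_eq_imp_eq[OF hs2 hs_norm_nonneg nn])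
  have sig: "sigma_norm G = \<bar>a\<bar> ^ k * norm c ^ (k * p)"
    unfolding sigma_norm_def
  proof (rule cSup_eq_maximum)
    define x0 where "x0 = (1 / norm c) *\<^sub>R c"
    have nx0: "norm x0 = 1" unfolding x0_def using c by simp
    have cx0: "c \<bullet> x0 = norm c" unfolding x0_def using c
      by (simp add: power2_norm_eq_inner[symmetric] power2_eq_square)
    show "\<bar>a\<bar> ^ k * norm c ^ (k * p) \<in> {\<bar>meval G x\<bar> |x. norm x = 1}"
      using nx0 cx0 by (auto simp: mG abs_mult power_abs intro!: exI[of _ x0])
    fix z assume "z \<in> {\<bar>meval G x\<bar> |x. norm x = 1}"
    then obtain x where x: "norm x = 1" "z = \<bar>meval G x\<bar>" by blast
    have "\<bar>c \<bullet> x\<bar> \<le> norm c" using Cauchy_Schwarz_ineq2[of c x] x by simp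
    then have "\<bar>c \<bullet> x\<bar> ^ (k * p) \<le> norm c ^ (k * p)" by (intro power_mono) auto
    then show "z \<le> \<bar>a\<bar> ^ k * norm c ^ (k * p)"
      using x by (auto simp: mG abs_mult power_abs intro!: mult_left_mono)
  qed
  show ?thesis using hs sig fk by simp
qed


lemma pow_powr_inv:
  fixes z :: real
  assumes "0 \<le> z" "k \<ge> 1"
  shows "(z ^ k) powr (1 / real k) = z"
proof (cases "z = 0")
  case True then show ?thesis using assms by simp
next
  case False
  then have zp: "z > 0" using assms by simp
  have "(z ^ k) powr (1 / real k) = (z powr real k) powr (1 / real k)" using zp by (simp add: powr_realpow)
  also have "\<dots> = z" using assms zp by (simp add: powr_powr)
  finally show ?thesis .
qed

lemma powr_inv_pow:
  fixes y :: real
  assumes "0 < y" "k \<ge> 1"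
  shows "(y powr (1 / real k)) ^ k = y"
proof -
  have "(y powr (1 / real k)) ^ k = (y powr (1 / real k)) powr real k"
    using assms by (simp add: powr_realpow)
  also have "\<dots> = y" using assms by (simp add: powr_powr)
  finally show ?thesis .
qed

lemma partB:
  fixes f :: "'n::finite mpoly"
  assumes f0: "f \<noteq> 0" and p1: "p \<ge> 1" and hf: "homogeneous p f"
    and nr: "\<not> (\<exists>(a::real) (c::real^'n). a \<noteq> 0 \<and> c \<noteq> 0 \<and> (\<forall>x. meval f x = a * (c \<bullet> x) ^ p))"
  shows "(\<forall>k l::nat. k \<ge> 1 \<longrightarrow> l \<ge> 1 \<longrightarrow> hs_norm (f ^ (k + l)) < hs_norm (f ^ k) * hs_norm (f ^ l))
          \<and> (\<forall>k::nat. k \<ge> 1 \<longrightarrow> hs_norm (f ^ (2 * k)) < (hs_norm (f ^ k))\<^sup>2)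
          \<and> (\<forall>k::nat. k \<ge> 1 \<longrightarrow> sigma_norm f ^ k < hs_norm (f ^ k))
          \<and> (\<exists>\<rho>::real. (\<lambda>k. hs_norm (f ^ k) powr (1 / real k)) \<longlonglongrightarrow> \<rho>
                \<and> \<rho> \<ge> sigma_norm f
                \<and> (\<forall>k::nat. k \<ge> 1 \<longrightarrow> \<rho> < hs_norm (f ^ k) powr (1 / real k)))"
proof -
  have hfk: "homogeneous (k * p) (f ^ k)" for k by (rule homogeneous_power[OF hf])
  obtain x0 where x0: "meval f x0 \<noteq> 0" using meval_eq_0_imp[of f] f0 by blast
  have fk0: "f ^ k \<noteq> 0" for k
  proof
    assume "f ^ k = 0"
    then have "meval (f ^ k) x0 = 0" by (simp add: meval_zero)
    then show False using x0 by (simp add: meval_power)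
  qed
  have strict: "hs_norm (f ^ (k + l)) < hs_norm (f ^ k) * hs_norm (f ^ l)" if k: "k \<ge> 1" and l: "l \<ge> 1" for k l
  proof -
    have sq: "(hs_norm (f ^ k * f ^ l))\<^sup>2 \<le> (hs_norm (f ^ k))\<^sup>2 * (hs_norm (f ^ l))\<^sup>2"
      by (rule hs_mult_sq(1)[OF hfk hfk])
    have le: "hs_norm (f ^ k * f ^ l) \<le> hs_norm (f ^ k) * hs_norm (f ^ l)"
    proof (rule power2_le_imp_le)
      show "(hs_norm (f ^ k * f ^ l))\<^sup>2 \<le> (hs_norm (f ^ k) * hs_norm (f ^ l))\<^sup>2"
        using sq by (simp add: power_mult_distrib)
      show "0 \<le> hs_norm (f ^ k) * hs_norm (f ^ l)" by (simp add: hs_norm_nonneg)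
    qed
    have ne: "hs_norm (f ^ k * f ^ l) \<noteq> hs_norm (f ^ k) * hs_norm (f ^ l)"
    proof
      assume e: "hs_norm (f ^ k * f ^ l) = hs_norm (f ^ k) * hs_norm (f ^ l)"
      then have e2: "(hs_norm (f ^ k * f ^ l))\<^sup>2 = (hs_norm (f ^ k))\<^sup>2 * (hs_norm (f ^ l))\<^sup>2"
        by (simp add: power_mult_distrib)
      have lp: "l * p \<ge> 1" using l p1 by simp
      obtain \<alpha> c where \<alpha>c: "\<alpha> \<noteq> 0" "c \<noteq> 0" "\<forall>x. meval (f ^ k) x = \<alpha> * (c \<bullet> x) ^ (k * p)"
        using rank_one_of_eq[OF hfk hfk lp fk0 fk0 e2] by blast
      obtain \<beta> where "\<beta> \<noteq> 0" "\<forall>x. meval f x = \<beta> * (c \<bullet> x) ^ p"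
        using power_rank_one[OF hf k \<alpha>c(1) \<alpha>c(2) \<alpha>c(3)] by blast
      then show False using nr \<alpha>c(2) by blast
    qed
    show ?thesis using le ne by (simp add: power_add)
  qed
  have x00: "x0 \<noteq> 0"
  proof
    assume "x0 = 0"
    then have "meval f x0 = meval f (0 *\<^sub>R x0)" by simp
    also have "\<dots> = 0" using meval_scale[OF hf, of 0 x0] p1 by (simp add: power_0_left)
    finally show False using x0 by simp
  qed
  define u where "u = (1 / norm x0) *\<^sub>R x0"
  have nu: "norm u = 1" unfolding u_def using x00 by simp
  have mu: "meval f u \<noteq> 0"
    unfolding u_def meval_scale[OF hf] using x0 x00 by simp
  have spos: "sigma_norm f > 0"
    using sigma_upper[OF hf nu] mu by linarith
  define b where "b k = hs_norm (f ^ k)" for k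
  have sroot: "sigma_norm f \<le> b k powr (1 / real k)" if k: "k \<ge> 1" for k
  proof (rule sigma_least)
    fix x :: "real^'n" assume nx: "norm x = 1"
    have "\<bar>meval f x\<bar> ^ k = \<bar>meval (f ^ k) x\<bar>" by (simp add: meval_power power_abs)
    also have "\<dots> \<le> b k" unfolding b_def by (rule meval_bound[OF hfk nx])
    finally have le: "\<bar>meval f x\<bar> ^ k \<le> b k" .
    have "\<bar>meval f x\<bar> = (\<bar>meval f x\<bar> ^ k) powr (1 / real k)"
      using pow_powr_inv[OF abs_ge_zero k] by simp
    also have "\<dots> \<le> b k powr (1 / real k)"
      by (rule powr_mono2) (use le in auto)
    finally show "\<bar>meval f x\<bar> \<le> b k powr (1 / real k)" .
  qed
  have bpos: "b k > 0" if k: "k \<ge> 1" for k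
  proof -
    have "b k powr (1 / real k) > 0" using sroot[OF k] spos by linarith
    then show ?thesis using hs_norm_nonneg[of "f ^ k"] unfolding b_def
      by (cases "hs_norm (f ^ k) = 0") auto
  qed
  have sk: "sigma_norm f ^ k \<le> b k" if k: "k \<ge> 1" for k
  proof -
    have "sigma_norm f ^ k \<le> (b k powr (1 / real k)) ^ k"
      by (rule power_mono[OF sroot[OF k]]) (use spos in simp)
    then show ?thesis using powr_inv_pow[OF bpos[OF k] k] by simp
  qed
  define A where "A k = ln (b k)" for k
  have sub: "A (k + l) \<le> A k + A l" if "k \<ge> 1" "l \<ge> 1" for k l
  proof -
    have "b (k + l) < b k * b l" using strict[OF that] unfolding b_def .
    then have "ln (b (k + l)) \<le> ln (b k * b l)"
      using bpos that by (subst ln_le_cancel_iff) auto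
    then show ?thesis unfolding A_def using bpos that by (simp add: ln_mult_pos)
  qed
  have bdd: "real k * ln (sigma_norm f) \<le> A k" if "k \<ge> 1" for k
  proof -
    have "ln (sigma_norm f ^ k) \<le> ln (b k)"
      using sk[OF that] spos bpos[OF that] by (subst ln_le_cancel_iff) auto
    then show ?thesis unfolding A_def by (simp add: ln_realpow)
  qed
  let ?L = "INF k\<in>{1..}. A k / real k"
  have fek: "(\<lambda>k. A k / real k) \<longlonglongrightarrow> ?L" by (rule fekete[OF sub bdd])
  have bb: "bdd_below ((\<lambda>k. A k / real k) ` {1..})"
  proof (rule bdd_belowI[of _ "ln (sigma_norm f)"])
    fix y assume "y \<in> (\<lambda>k. A k / real k) ` {1..}"
    then obtain k where k: "k \<ge> 1" "y = A k / real k" by auto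
    have kp: "real k > 0" using k by simp
    show "ln (sigma_norm f) \<le> y" using bdd[OF k(1)] k(2) kp by (simp add: pos_le_divide_eq mult.commute)
  qed
  have bexp: "b k powr (1 / real k) = exp (A k / real k)" if "k \<ge> 1" for k
    using bpos[OF that] unfolding A_def powr_def by simp
  have conv: "(\<lambda>k. hs_norm (f ^ k) powr (1 / real k)) \<longlonglongrightarrow> exp ?L"
  proof -
    have te: "(\<lambda>k. exp (A k / real k)) \<longlonglongrightarrow> exp ?L" by (rule tendsto_exp[OF fek])
    have ev: "eventually (\<lambda>k. hs_norm (f ^ k) powr (1 / real k) = exp (A k / real k)) sequentially"
    proof (rule eventually_sequentiallyI[of 1])
      fix k :: nat assume "1 \<le> k"
      then show "hs_norm (f ^ k) powr (1 / real k) = exp (A k / real k)" using bexp unfolding b_def by blast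
    qed
    show ?thesis unfolding tendsto_cong[OF ev] by (rule te)
  qed
  have sr: "\<forall>n\<ge>1. sigma_norm f \<le> hs_norm (f ^ n) powr (1 / real n)"
    using sroot unfolding b_def by blast
  have rge: "sigma_norm f \<le> exp ?L"
    by (rule LIMSEQ_le_const[OF conv]) (rule exI[of _ 1], rule sr)
  have rlt: "exp ?L < hs_norm (f ^ k) powr (1 / real k)" if k: "k \<ge> 1" for k
  proof -
    have k2: "2 * k \<ge> 1" using k by simp
    have "?L \<le> A (2 * k) / real (2 * k)" by (rule cINF_lower[OF bb]) (use k2 in auto)
    moreover have "A (2 * k) < 2 * A k"
    proof -
      have "b (2 * k) < (b k)\<^sup>2" using strict[OF k k] unfolding b_def by (simp add: mult_2 power2_eq_square)
      then have "ln (b (2 * k)) < ln ((b k)\<^sup>2)"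
        using bpos[OF k] bpos[OF k2] by (subst ln_less_cancel_iff) auto
      then show ?thesis unfolding A_def by (simp add: ln_realpow)
    qed
    ultimately have "?L < A k / real k" using k by (simp add: field_simps)
    then have "exp ?L < exp (A k / real k)" by simp
    then show ?thesis using bexp[OF k] unfolding b_def by simp
  qed
  have sstrict: "sigma_norm f ^ k < hs_norm (f ^ k)" if k: "k \<ge> 1" for k
  proof -
    have "sigma_norm f < hs_norm (f ^ k) powr (1 / real k)" using rge rlt[OF k] by linarith
    then have "sigma_norm f ^ k < (hs_norm (f ^ k) powr (1 / real k)) ^ k"
      using spos k by (intro power_strict_mono) auto
    then show ?thesis using powr_inv_pow[OF bpos[OF k] k] unfolding b_def by simp
  qed
  have two: "hs_norm (f ^ (2 * k)) < (hs_norm (f ^ k))\<^sup>2" if "k \<ge> 1" for k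
    using strict[OF that that] by (simp add: mult_2 power2_eq_square)
  show ?thesis using strict two sstrict conv rge rlt by blast
qed

theorem theorem2p2:
  fixes f :: "'n::finite mpoly" and p :: nat
  assumes "f \<noteq> 0" and "p \<ge> 1" and "homogeneous p f"
  shows "(\<forall>(a::real) (c::real^'n). a \<noteq> 0 \<longrightarrow> c \<noteq> 0 \<longrightarrow> (\<forall>x. meval f x = a * (c \<bullet> x) ^ p) \<longrightarrow>
            (\<forall>k::nat. k \<ge> 1 \<longrightarrow> hs_norm (f ^ k) = \<bar>a\<bar> ^ k * norm c ^ (k * p) \<and>
                                 sigma_norm (f ^ k) = \<bar>a\<bar> ^ k * norm c ^ (k * p)))
       \<and> (\<not> (\<exists>(a::real) (c::real^'n). a \<noteq> 0 \<and> c \<noteq> 0 \<and> (\<forall>x. meval f x = a * (c \<bullet> x) ^ p)) \<longrightarrow>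
            (\<forall>k l::nat. k \<ge> 1 \<longrightarrow> l \<ge> 1 \<longrightarrow> hs_norm (f ^ (k + l)) < hs_norm (f ^ k) * hs_norm (f ^ l))
          \<and> (\<forall>k::nat. k \<ge> 1 \<longrightarrow> hs_norm (f ^ (2 * k)) < (hs_norm (f ^ k))\<^sup>2)
          \<and> (\<forall>k::nat. k \<ge> 1 \<longrightarrow> sigma_norm f ^ k < hs_norm (f ^ k))
          \<and> (\<exists>\<rho>::real. (\<lambda>k. hs_norm (f ^ k) powr (1 / real k)) \<longlonglongrightarrow> \<rho>
                \<and> \<rho> \<ge> sigma_norm f
                \<and> (\<forall>k::nat. k \<ge> 1 \<longrightarrow> \<rho> < hs_norm (f ^ k) powr (1 / real k))))"
  using partA[OF assms(3)] partB[OF assms(1,2,3)] by blast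

end
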